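(* Let $(M,d)$ be a metric space, $\mathsf{P}\subseteq M$ a set of $n$ points, $1\le \ell\le k\le n$ integers, $m=\lfloor k/\ell\rfloor$, and $c\ge1$. Let $Q=\{q_1,\dots,q_m\}\subseteq\mathsf{P}$ satisfy $\sum_{p\in\mathsf{P}} d_Q(p,1)\le c\,\sigma_{\mathrm{med}}$, where $\sigma_{\mathrm{med}}=\min_{S\subseteq\mathsf{P},|S|=m}\sum_{p\in\mathsf{P}} d_S(p,1)$. Let $C\subseteq\mathsf{P}$ with $|C|=k$ and $C\supseteq\bigcup_{i=1}^m N_{\mathsf{P}}(q_i,\ell)$, and let $\sigma_{\mathrm{alg}}=\sum_{p\in\mathsf{P}} d_C(p,\ell)$ and $\sigma_{\mathrm{opt}}=\min_{C'\subseteq\mathsf{P},|C'|=k}\sum_{p\in\mathsf{P}} d_{C'}(p,\ell)$. Then $\sigma_{\mathrm{alg}}\le \sigma_{\mathrm{opt}}+2c\,\sigma_{\mathrm{med}}$.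
   Context: For a finite set $S\subseteq M$, a point $p\in M$ and an integer $1\le i\le |S|$, $d_S(p,i)$ denotes the radius of the smallest closed ball centered at $p$ containing at least $i$ points of $S$. The $i$ nearest neighbors of $p$ in $S$ are determined by ordering $s\in S$ lexicographically by $(d(p,s),\text{index of }s)$; $N_S(p,i)$ is the set of the first $i$ points in this order, so $|N_S(p,i)|=i$. *)

theory Defs
  imports "HOL-Analysis.Analysis"
begin

definition kdist :: "'a::metric_space set \<Rightarrow> 'a \<Rightarrow> nat \<Rightarrow> real" where
  "kdist S p i = Inf {r::real. 0 \<le> r \<and> i \<le> card {s \<in> S. dist p s \<le> r}}"

text \<open>N_S(p,i): the first i points of S in the lexicographic order on (d(p,s), index of s),
  where idx is the (injective) indexing of the points.\<close>
definition knn :: "('a \<Rightarrow> nat) \<Rightarrow> 'a::metric_space set \<Rightarrow> 'a \<Rightarrow> nat \<Rightarrow> 'a set" where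
  "knn idx S p i = {s \<in> S. card {t \<in> S. dist p t < dist p s \<or> (dist p t = dist p s \<and> idx t < idx s)} < i}"

end

theory Submission
  imports Defs
begin

lemma kdist_le:
  assumes "0 \<le> r" "i \<le> card {s\<in>S. dist p s \<le> r}"
  shows "kdist S p i \<le> r"
  unfolding kdist_def
  by (rule cInf_lower) (use assms in \<open>auto intro: bdd_belowI[where m=0]\<close>)

lemma kdist_attained:
  assumes "finite S" "i \<le> card S"
  shows "0 \<le> kdist S p i \<and> i \<le> card {s\<in>S. dist p s \<le> kdist S p i}"
proof -
  define E where "E = insert 0 (dist p ` S)"
  define D where "D = {r \<in> E. i \<le> card {s\<in>S. dist p s \<le> r}}"
  have fE: "finite E" using assms(1) by (simp add: E_def)
  have fD: "finite D" using fE by (simp add: D_def)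
  have "Max E \<in> D"
  proof -
    have "{s\<in>S. dist p s \<le> Max E} = S" using fE by (auto simp: E_def)
    moreover have "Max E \<in> E" using fE Max_in[OF fE] by (auto simp: E_def)
    ultimately show ?thesis using assms(2) by (simp add: D_def)
  qed
  hence neD: "D \<noteq> {}" by auto
  define r0 where "r0 = Min D"
  have r0D: "r0 \<in> D" using fD neD by (simp add: r0_def)
  have E0: "\<forall>x\<in>E. 0 \<le> x" by (auto simp: E_def)
  have "kdist S p i = r0"
    unfolding kdist_def
  proof (rule cInf_eq_minimum)
    show "r0 \<in> {r. 0 \<le> r \<and> i \<le> card {s \<in> S. dist p s \<le> r}}"
      using r0D E0 by (auto simp: D_def)
  next
    fix x assume x: "x \<in> {r. 0 \<le> r \<and> i \<le> card {s \<in> S. dist p s \<le> r}}"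
    define F where "F = insert 0 {dist p s | s. s\<in>S \<and> dist p s \<le> x}"
    have fF: "finite F" using assms(1) by (simp add: F_def)
    define r' where "r' = Max F"
    have r'x: "r' \<le> x" using fF x by (auto simp: r'_def F_def)
    have eq: "{s\<in>S. dist p s \<le> r'} = {s\<in>S. dist p s \<le> x}"
    proof
      show "{s\<in>S. dist p s \<le> r'} \<subseteq> {s\<in>S. dist p s \<le> x}" using r'x by auto
      show "{s\<in>S. dist p s \<le> x} \<subseteq> {s\<in>S. dist p s \<le> r'}"
        using fF by (auto simp: r'_def F_def intro!: Max_ge)
    qed
    have "r' \<in> F" using Max_in[OF fF] by (simp add: r'_def F_def)
    hence "r' \<in> E" by (auto simp: F_def E_def)
    hence "r' \<in> D" using eq x by (simp add: D_def)
    hence "r0 \<le> r'" using fD by (simp add: r0_def)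
    thus "r0 \<le> x" using r'x by simp
  qed
  thus ?thesis using r0D E0 by (auto simp: D_def)
qed


lemma knn_card:
  assumes fin: "finite P" and inj: "inj_on idx P" and lP: "l \<le> card P"
  shows "card (knn idx P q l) = l"
proof -
  define lt where "lt = (\<lambda>t s. dist q t < dist q s \<or> (dist q t = dist q s \<and> idx t < idx s))"
  define rk where "rk = (\<lambda>s. card {t\<in>P. lt t s})"
  have knn_eq: "knn idx P q l = {s\<in>P. rk s < l}"
    by (simp add: knn_def rk_def lt_def)
  have mono: "rk s < rk s'" if "s \<in> P" "s' \<in> P" "lt s s'" for s s'
  proof -
    have "insert s {t\<in>P. lt t s} \<subseteq> {t\<in>P. lt t s'}"
      using that by (auto simp: lt_def)
    moreover have "s \<notin> {t\<in>P. lt t s}" by (auto simp: lt_def)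
    ultimately have "card (insert s {t\<in>P. lt t s}) \<le> card {t\<in>P. lt t s'}"
      using fin by (intro card_mono) auto
    thus ?thesis using fin \<open>s \<notin> _\<close> by (simp add: rk_def)
  qed
  have tot: "lt s s' \<or> lt s' s" if "s \<in> P" "s' \<in> P" "s \<noteq> s'" for s s'
  proof -
    have "idx s \<noteq> idx s'" using inj that by (auto dest: inj_onD)
    thus ?thesis by (auto simp: lt_def)
  qed
  have injr: "inj_on rk P"
  proof (rule inj_onI, rule ccontr)
    fix s s' assume "s \<in> P" "s' \<in> P" "rk s = rk s'" "s \<noteq> s'"
    thus False using tot mono by (metis less_irrefl)
  qed
  have rng: "rk ` P \<subseteq> {..<card P}"
  proof
    fix x assume "x \<in> rk ` P"
    then obtain s where s: "s \<in> P" "x = rk s" by auto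
    have "{t\<in>P. lt t s} \<subseteq> P - {s}" by (auto simp: lt_def)
    hence "rk s \<le> card (P - {s})" using fin by (simp add: rk_def card_mono)
    also have "\<dots> < card P" using fin s(1) by (metis card_Diff1_less)
    finally show "x \<in> {..<card P}" using s by simp
  qed
  have img: "rk ` P = {..<card P}"
    using rng card_image[OF injr] by (intro card_subset_eq) auto
  have "rk ` {s\<in>P. rk s < l} = {..<l}"
  proof
    show "rk ` {s\<in>P. rk s < l} \<subseteq> {..<l}" by auto
    show "{..<l} \<subseteq> rk ` {s\<in>P. rk s < l}"
    proof
      fix x assume "x \<in> {..<l}"
      hence "x \<in> rk ` P" using img lP by auto
      thus "x \<in> rk ` {s\<in>P. rk s < l}" using \<open>x \<in> {..<l}\<close> by auto
    qed
  qed
  moreover have "inj_on rk {s\<in>P. rk s < l}" using injr by (rule inj_on_subset) auto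
  ultimately show ?thesis using knn_eq card_image by (metis card_lessThan)
qed

lemma knn_dist:
  assumes fin: "finite P" and lP: "l \<le> card P" and s: "s \<in> knn idx P q l"
  shows "dist q s \<le> kdist P q l"
proof (rule ccontr)
  assume "\<not> ?thesis"
  hence lt: "kdist P q l < dist q s" by simp
  have "l \<le> card {t\<in>P. dist q t \<le> kdist P q l}" using kdist_attained[OF fin lP] by blast
  also have "\<dots> \<le> card {t \<in> P. dist q t < dist q s \<or> (dist q t = dist q s \<and> idx t < idx s)}"
    using fin lt by (intro card_mono) auto
  finally show False using s by (simp add: knn_def)
qed


lemma pointwise:
  assumes fin: "finite P" and inj: "inj_on idx P" and lP: "l \<le> card P"
    and CP: "C \<subseteq> P" and knnC: "knn idx P q l \<subseteq> C" and qP: "q \<in> P"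
    and C'P: "C' \<subseteq> P" and lC': "l \<le> card C'"
  shows "kdist C p l \<le> 2 * dist p q + kdist C' p l"
proof -
  have finC: "finite C" using fin CP finite_subset by blast
  have finC': "finite C'" using fin C'P finite_subset by blast
  have aq: "0 \<le> kdist P q l" using kdist_attained[OF fin lP] by blast
  have s1: "kdist C p l \<le> dist p q + kdist P q l"
  proof (rule kdist_le)
    show "0 \<le> dist p q + kdist P q l" using aq by simp
    have "knn idx P q l \<subseteq> {s\<in>C. dist p s \<le> dist p q + kdist P q l}"
    proof
      fix s assume s: "s \<in> knn idx P q l"
      have "dist p s \<le> dist p q + dist q s" by (rule dist_triangle)
      also have "\<dots> \<le> dist p q + kdist P q l" using knn_dist[OF fin lP s] by simp
      finally show "s \<in> {s\<in>C. dist p s \<le> dist p q + kdist P q l}" using s knnC by auto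
    qed
    hence "card (knn idx P q l) \<le> card {s\<in>C. dist p s \<le> dist p q + kdist P q l}"
      using finC by (intro card_mono) auto
    thus "l \<le> card {s\<in>C. dist p s \<le> dist p q + kdist P q l}"
      using knn_card[OF fin inj lP] by simp
  qed
  have ap: "0 \<le> kdist P p l \<and> l \<le> card {s\<in>P. dist p s \<le> kdist P p l}"
    using kdist_attained[OF fin lP] by blast
  have s2: "kdist P q l \<le> dist p q + kdist P p l"
  proof (rule kdist_le)
    show "0 \<le> dist p q + kdist P p l" using ap by simp
    have "{s\<in>P. dist p s \<le> kdist P p l} \<subseteq> {s\<in>P. dist q s \<le> dist p q + kdist P p l}"
    proof (safe)
      fix s assume "s \<in> P" "dist p s \<le> kdist P p l"
      moreover have "dist q s \<le> dist q p + dist p s" by (rule dist_triangle)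
      ultimately show "dist q s \<le> dist p q + kdist P p l" by (simp add: dist_commute)
    qed
    hence "card {s\<in>P. dist p s \<le> kdist P p l} \<le> card {s\<in>P. dist q s \<le> dist p q + kdist P p l}"
      using fin by (intro card_mono) auto
    thus "l \<le> card {s\<in>P. dist q s \<le> dist p q + kdist P p l}" using ap by linarith
  qed
  have ac: "0 \<le> kdist C' p l \<and> l \<le> card {s\<in>C'. dist p s \<le> kdist C' p l}"
    using kdist_attained[OF finC' lC'] by blast
  have s3: "kdist P p l \<le> kdist C' p l"
  proof (rule kdist_le)
    show "0 \<le> kdist C' p l" using ac by simp
    have "card {s\<in>C'. dist p s \<le> kdist C' p l} \<le> card {s\<in>P. dist p s \<le> kdist C' p l}"
      using fin C'P by (intro card_mono) auto
    thus "l \<le> card {s\<in>P. dist p s \<le> kdist C' p l}" using ac by linarith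
  qed
  show ?thesis using s1 s2 s3 by linarith
qed

theorem claim1:
  fixes P Q C :: "'a::metric_space set" and idx :: "'a \<Rightarrow> nat"
    and n k l m :: nat and c :: real
  assumes "finite P" and "card P = n" and "inj_on idx P"
    and "1 \<le> l" and "l \<le> k" and "k \<le> n"
    and "m = k div l" and "1 \<le> c"
    and "Q \<subseteq> P" and "card Q = m"
    and "(\<Sum>p\<in>P. kdist Q p 1) \<le> c * Min {(\<Sum>p\<in>P. kdist S p 1) | S. S \<subseteq> P \<and> card S = m}"
    and "C \<subseteq> P" and "card C = k" and "(\<Union>q\<in>Q. knn idx P q l) \<subseteq> C"
  shows "(\<Sum>p\<in>P. kdist C p l) \<le>
           Min {(\<Sum>p\<in>P. kdist C' p l) | C'. C' \<subseteq> P \<and> card C' = k}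
           + 2 * c * Min {(\<Sum>p\<in>P. kdist S p 1) | S. S \<subseteq> P \<and> card S = m}"
proof -
  note fin = assms(1)
  have lP: "l \<le> card P" using assms by simp
  have m1: "1 \<le> m" using assms(4,5,7) by (metis One_nat_def div_le_mono div_self not_one_le_zero)
  have finQ: "finite Q" using fin assms(9) finite_subset by blast
  define A where "A = {(\<Sum>p\<in>P. kdist C' p l) | C'. C' \<subseteq> P \<and> card C' = k}"
  have finA: "finite A"
  proof -
    have "A \<subseteq> (\<lambda>C'. \<Sum>p\<in>P. kdist C' p l) ` Pow P" by (auto simp: A_def)
    thus ?thesis using fin finite_subset by blast
  qed
  obtain C0 where "C0 \<subseteq> P" "card C0 = k" using obtain_subset_with_card_n assms(2,6) by metis
  hence "A \<noteq> {}" by (auto simp: A_def)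
  hence "Min A \<in> A" using finA by simp
  then obtain C' where C': "C' \<subseteq> P" "card C' = k" "Min A = (\<Sum>p\<in>P. kdist C' p l)"
    by (auto simp: A_def)
  have pt: "kdist C p l \<le> 2 * kdist Q p 1 + kdist C' p l" if p: "p \<in> P" for p
  proof -
    have "1 \<le> card {s\<in>Q. dist p s \<le> kdist Q p 1}"
      using kdist_attained[OF finQ, of 1 p] m1 assms(10) by simp
    hence "{s\<in>Q. dist p s \<le> kdist Q p 1} \<noteq> {}" by (metis card.empty not_one_le_zero)
    then obtain q where q: "q \<in> Q" "dist p q \<le> kdist Q p 1" by auto
    have "kdist C p l \<le> 2 * dist p q + kdist C' p l"
      using pointwise[OF fin assms(3) lP assms(12), of q C' p] q assms(9,14) C' assms(5) by auto
    thus ?thesis using q by linarith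
  qed
  have "(\<Sum>p\<in>P. kdist C p l) \<le> (\<Sum>p\<in>P. 2 * kdist Q p 1 + kdist C' p l)"
    using pt by (rule sum_mono)
  also have "\<dots> = 2 * (\<Sum>p\<in>P. kdist Q p 1) + Min A"
    using C'(3) by (simp add: sum.distrib sum_distrib_left)
  finally show ?thesis using assms(11) unfolding A_def by linarith
qed

end
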